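(* Let $\mathcal{X}$ be an input set, $\mathcal{T}=\{1,\dots,T\}$ a finite set of task indices, and for each $t\in\mathcal{T}$ let $\mathcal{Y}^t$ be an output space. Fix a context data set $C$. Suppose we are given a distribution $p(z\mid C)$ on a global latent variable $z$, conditional distributions $p(v^t\mid z,t,C)$ on task-specific latent variables $v^t$ ($t\in\mathcal{T}$), and conditional distributions $p(y\mid x,t,v^t)$ on $\mathcal{Y}^t$ for $x\in\mathcal{X}$, $t\in\mathcal{T}$. Consider the generative process $$z\sim p(z\mid C),\qquad v^t\sim p(v^t\mid z,t,C)\ \ \forall t\in\mathcal{T},\qquad y_{(x_i,t)}\sim p(y_{(x_i,t)}\mid x_i,t,v^t),$$ which, for any finite sequence of inputs $X=((x_1,t_1),\dots,(x_n,t_n))$ in $\mathcal{X}\times\mathcal{T}$ and outputs $Y=(y_{(x_1,t_1)},\dots,y_{(x_n,t_n)})$, defines $$p(Y\mid X,C)=\int\!\!\int\Big(\prod_{i=1}^n p(y_{(x_i,t_i)}\mid x_i,t_i,v^{t_i})\Big)\Big(\prod_{t=1}^T p(v^t\mid z,t,C)\Big)p(z\mid C)\,dv^{1:T}\,dz .$$ Assume (i) these distributions are finite so that the order of integration may be interchanged, and (ii) the output distribution selects the task-specific latent variable by the task index, i.e. there is a distribution $\tilde p$ with $\tilde p(y_{(x,t)}\mid x,t,v^{1:T})=p(y_{(x,t)}\mid x,t,v^t)$ for all $x,t$. Then there exists a stochastic process $H:\mathcal{X}\times\mathcal{T}\times\Omega\to\bigcup_{t\in\mathcal{T}}\mathcal{Y}^t$,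 i.e. a distribution over functions $h:\mathcal{X}\times\mathcal{T}\to\bigcup_{t\in\mathcal{T}}\mathcal{Y}^t$, whose finite-dimensional distributions are the $p(Y\mid X,C)$ above, so that the data are generated by this process.
   Context: The context $C$ is a finite set of observed input-output pairs $((x_i,t),y_i^t)$ with $x_i\in\mathcal{X}$, $t\in\mathcal{T}$, $y_i^t\in\mathcal{Y}^t$. For a pair $(x,t)$, $y_{(x,t)}$ denotes the output of task $t$ at input $x$. $v^{1:T}=(v^1,\dots,v^T)$. A stochastic process here is a collection of random variables indexed by $\mathcal{X}\times\mathcal{T}$ on a common probability space $(\Omega,\mathcal{F},\mathbb{P})$, equivalently a random function $h$; its finite-dimensional distribution at inputs $X$ is the joint law of the outputs at those inputs. *)

theory Defs
  imports "HOL-Probability.Probability"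
begin

text \<open>Inputs have type 'x, global latent 'z,
task latents 'v (with task-specific measurable space V t), outputs 'y
(with task-specific output space Y t; the union of the Y t is carried by the type 'y).
The densities of the paper are generalised to Markov kernels:
  Pz          : the distribution p(z | C)
  Kv t z      : the distribution p(v^t | z, t, C)
  Ky x t w    : the distribution p(y | x, t, v^t = w).\<close>

text \<open>This is the measure-theoretic form of
the iterated integral in the paper.\<close>
definition model_fdd ::
  "nat \<Rightarrow> 'z measure \<Rightarrow> (nat \<Rightarrow> 'z \<Rightarrow> 'v measure) \<Rightarrow>
   ('x \<Rightarrow> nat \<Rightarrow> 'v \<Rightarrow> 'y measure) \<Rightarrow> ('x \<times> nat) list \<Rightarrow> (nat \<Rightarrow> 'y) measure" where
  "model_fdd T Pz Kv Ky xs =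
     Pz \<bind> (\<lambda>z. (PiM {1..T} (\<lambda>t. Kv t z)) \<bind>
       (\<lambda>v. PiM {..<length xs} (\<lambda>i. Ky (fst (xs ! i)) (snd (xs ! i)) (v (snd (xs ! i))))))"

end

theory Submission
  imports Defs
begin

lemma kernel_PiM:
  assumes K: "\<And>i. i \<in> I \<Longrightarrow> K i \<in> M \<rightarrow>\<^sub>M prob_algebra (N i)"
  shows "(\<lambda>a. PiM I (\<lambda>i. K i a)) \<in> M \<rightarrow>\<^sub>M prob_algebra (PiM I N)"
proof (rule measurable_prob_algebra_generated[OF sets_PiM Int_stable_prod_algebra prod_algebra_sets_into_space])
  have Ka: "prob_space (K i a) \<and> sets (K i a) = sets (N i)" if "a \<in> space M" "i \<in> I" for a i
    using measurable_space[OF K[OF that(2)] that(1)] by (simp add: space_prob_algebra)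
  fix a assume a: "a \<in> space M"
  show "prob_space (PiM I (\<lambda>i. K i a))" using Ka[OF a] by (intro prob_space_PiM) auto
  show "sets (PiM I (\<lambda>i. K i a)) = sets (PiM I N)" by (rule sets_PiM_cong) (use Ka[OF a] in auto)
next
  have Ka: "prob_space (K i a) \<and> sets (K i a) = sets (N i)" if "a \<in> space M" "i \<in> I" for a i
    using measurable_space[OF K[OF that(2)] that(1)] by (simp add: space_prob_algebra)
  fix A assume "A \<in> prod_algebra I N"
  then obtain J E where A: "A = prod_emb I N J (\<Pi>\<^sub>E j\<in>J. E j)"
    "finite J" "J \<subseteq> I" "\<And>i. i \<in> J \<Longrightarrow> E i \<in> sets (N i)"
    by (auto elim!: prod_algebraE)
  have eq: "emeasure (PiM I (\<lambda>i. K i a)) A = (\<Prod>j\<in>J. emeasure (K j a) (E j))" if a: "a \<in> space M" for a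
  proof -
    have sp: "\<And>i. i \<in> I \<Longrightarrow> space (K i a) = space (N i)"
      by (metis Ka[OF a] sets_eq_imp_space_eq)
    have "A = prod_emb I (\<lambda>i. K i a) J (\<Pi>\<^sub>E j\<in>J. E j)"
      unfolding A(1) prod_emb_def using sp by (auto simp: PiE_iff)
    then show ?thesis using A Ka[OF a]
      by (simp add: emeasure_PiM_emb subset_eq)
  qed
  have m: "(\<lambda>a. emeasure (K j a) (E j)) \<in> borel_measurable M" if "j \<in> J" for j
    using measurable_compose[OF measurable_prob_algebraD[OF K] measurable_emeasure_subprob_algebra, of j "E j"]
      A that by auto
  show "(\<lambda>a. emeasure (PiM I (\<lambda>i. K i a)) A) \<in> borel_measurable M"
    by (rule measurable_cong[THEN iffD2, OF eq]) (auto intro!: borel_measurable_prod_ennreal m)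
qed


theorem proposition1:
  fixes T :: nat
    and Pz :: "'z measure"
    and V :: "nat \<Rightarrow> 'v measure"
    and Y :: "nat \<Rightarrow> 'y measure"
    and Kv :: "nat \<Rightarrow> 'z \<Rightarrow> 'v measure"
    and Ky :: "'x \<Rightarrow> nat \<Rightarrow> 'v \<Rightarrow> 'y measure"
  assumes "prob_space Pz"
    and "\<forall>t\<in>{1..T}. Kv t \<in> Pz \<rightarrow>\<^sub>M prob_algebra (V t)"
    and "\<forall>x. \<forall>t\<in>{1..T}. Ky x t \<in> V t \<rightarrow>\<^sub>M prob_algebra (Y t)"
  shows "\<exists>P :: ('x \<times> nat \<Rightarrow> 'y) measure.
           prob_space P \<and>
           sets P = sets (PiM (UNIV \<times> {1..T}) (\<lambda>(x, t). Y t)) \<and>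
           (\<forall>xs. distinct xs \<longrightarrow> set xs \<subseteq> UNIV \<times> {1..T} \<longrightarrow>
              distr P (PiM {..<length xs} (\<lambda>i. Y (snd (xs ! i))))
                      (\<lambda>h. \<lambda>i\<in>{..<length xs}. h (xs ! i))
              = model_fdd T Pz Kv Ky xs)"
proof -
  note Pz = assms(1) and Kvm = assms(2) and Kym = assms(3)
  have Kysp: "prob_space (Ky x t w) \<and> sets (Ky x t w) = sets (Y t)"
    if "t \<in> {1..T}" "w \<in> space (V t)" for x t w
  proof -
    have "Ky x t \<in> V t \<rightarrow>\<^sub>M prob_algebra (Y t)" using Kym that(1) by blast
    from measurable_space[OF this that(2)] show ?thesis by (simp add: space_prob_algebra)
  qed
  define I where "I = (UNIV :: 'x set) \<times> {1..T}"
  define N where "N = (\<lambda>i::'x \<times> nat. Y (snd i))"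
  have N_eq: "(\<lambda>(x, t). Y t) = N" unfolding N_def by auto
  define VV where "VV = PiM {1..T} V"
  define KV where "KV = (\<lambda>z. PiM {1..T} (\<lambda>t. Kv t z))"
  define KY where "KY = (\<lambda>v. PiM I (\<lambda>i. Ky (fst i) (snd i) (v (snd i))))"
  have KVm: "KV \<in> Pz \<rightarrow>\<^sub>M prob_algebra VV"
    unfolding KV_def VV_def by (rule kernel_PiM) (use Kvm in auto)
  have KYm: "KY \<in> VV \<rightarrow>\<^sub>M prob_algebra (PiM I N)"
    unfolding KY_def VV_def
  proof (rule kernel_PiM)
    fix i assume i: "i \<in> I"
    then have t: "snd i \<in> {1..T}" unfolding I_def by auto
    show "(\<lambda>v. Ky (fst i) (snd i) (v (snd i))) \<in> Pi\<^sub>M {1..T} V \<rightarrow>\<^sub>M prob_algebra (N i)"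
      unfolding N_def
      by (rule measurable_compose[OF measurable_component_singleton[OF t]]) (use Kym t in auto)
  qed
  define G where "G = (\<lambda>z. KV z \<bind> KY)"
  have Gm: "G \<in> Pz \<rightarrow>\<^sub>M prob_algebra (PiM I N)"
    unfolding G_def by (rule measurable_bind_prob_space[OF KVm KYm])
  have Pzsp: "Pz \<in> space (prob_algebra Pz)" using Pz by (simp add: space_prob_algebra)
  have Pzne: "space Pz \<noteq> {}" using Pz prob_space.not_empty by blast
  define P where "P = Pz \<bind> G"
  have "prob_space P" unfolding P_def by (rule prob_space_bind'[OF Pzsp Gm])
  moreover have "sets P = sets (PiM (UNIV \<times> {1..T}) (\<lambda>(x, t). Y t))"
    unfolding P_def N_eq I_def[symmetric] by (rule sets_bind'[OF Pzsp Gm])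
  moreover have "distr P (PiM {..<length xs} (\<lambda>i. Y (snd (xs ! i))))
                      (\<lambda>h. \<lambda>i\<in>{..<length xs}. h (xs ! i))
              = model_fdd T Pz Kv Ky xs"
    if xs: "distinct xs" "set xs \<subseteq> UNIV \<times> {1..T}" for xs
  proof -
    define R where "R = PiM {..<length xs} (\<lambda>i. Y (snd (xs ! i)))"
    define f where "f = (\<lambda>h::'x \<times> nat \<Rightarrow> 'y. \<lambda>i\<in>{..<length xs}. h (xs ! i))"
    have xsI: "xs ! i \<in> I" if "i < length xs" for i
      using xs that nth_mem unfolding I_def by blast
    have fm: "f \<in> PiM I N \<rightarrow>\<^sub>M R"
      unfolding f_def R_def
      by (rule measurable_restrict) (auto simp: N_def intro!: measurable_component_singleton xsI)
    have KVsp: "KV z \<in> space (prob_algebra VV)" if "z \<in> space Pz" for z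
      using measurable_space[OF KVm that] .
    have sKV: "sets (KV z) = sets VV" and neKV: "space (KV z) \<noteq> {}" if "z \<in> space Pz" for z
      using KVsp[OF that] by (auto simp: space_prob_algebra prob_space.not_empty)
    have inner: "distr (KY v) R f = PiM {..<length xs} (\<lambda>i. Ky (fst (xs ! i)) (snd (xs ! i)) (v (snd (xs ! i))))"
      if v: "v \<in> space VV" for v
    proof -
      have ps: "prob_space (Ky (fst i) (snd i) (v (snd i)))" if "i \<in> I" for i
      proof -
        have t: "snd i \<in> {1..T}" using that unfolding I_def by auto
        have "v (snd i) \<in> space (V (snd i))" using v t unfolding VV_def by (auto simp: space_PiM)
        then show ?thesis using Kysp t by blast
      qed
      have "distr (KY v) R f = distr (KY v) (PiM {..<length xs} (\<lambda>n. Ky (fst (xs ! n)) (snd (xs ! n)) (v (snd (xs ! n))))) (\<lambda>\<omega>. \<lambda>n\<in>{..<length xs}. \<omega> (xs ! n))"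
      proof (rule distr_cong)
        show "sets R = sets (PiM {..<length xs} (\<lambda>n. Ky (fst (xs ! n)) (snd (xs ! n)) (v (snd (xs ! n)))))"
          unfolding R_def
        proof (rule sets_PiM_cong)
          fix i assume i: "i \<in> {..<length xs}"
          then have t: "snd (xs ! i) \<in> {1..T}" using xsI[of i] unfolding I_def by (auto simp: mem_Times_iff)
          have "v (snd (xs ! i)) \<in> space (V (snd (xs ! i)))" using v t unfolding VV_def by (auto simp: space_PiM)
          then show "sets (Y (snd (xs ! i))) = sets (Ky (fst (xs ! i)) (snd (xs ! i)) (v (snd (xs ! i))))"
            using Kysp t by metis
        qed simp
      qed (simp_all add: f_def)
      also have "\<dots> = PiM {..<length xs} (\<lambda>i. Ky (fst (xs ! i)) (snd (xs ! i)) (v (snd (xs ! i))))"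
        unfolding KY_def
        using distr_PiM_reindex[of I "\<lambda>i. Ky (fst i) (snd i) (v (snd i))" "nth xs" "{..<length xs}"]
          ps xsI inj_on_nth[OF xs(1)] by auto
      finally show ?thesis .
    qed
    have "distr P R f = Pz \<bind> (\<lambda>z. distr (G z) R f)"
      unfolding P_def by (rule distr_bind[OF measurable_prob_algebraD[OF Gm] Pzne fm])
    also have "\<dots> = Pz \<bind> (\<lambda>z. KV z \<bind> (\<lambda>v. distr (KY v) R f))"
    proof (rule bind_cong[OF refl])
      fix z assume z: "z \<in> space Pz"
      have KYm': "KY \<in> KV z \<rightarrow>\<^sub>M subprob_algebra (PiM I N)"
        using measurable_prob_algebraD[OF KYm] measurable_cong_sets[OF sKV[OF z] refl] by blast
      show "distr (G z) R f = KV z \<bind> (\<lambda>v. distr (KY v) R f)"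
        unfolding G_def by (rule distr_bind[OF KYm' neKV[OF z] fm])
    qed
    also have "\<dots> = model_fdd T Pz Kv Ky xs"
      unfolding model_fdd_def
    proof (rule bind_cong[OF refl])
      fix z assume z: "z \<in> space Pz"
      show "KV z \<bind> (\<lambda>v. distr (KY v) R f) = Pi\<^sub>M {1..T} (\<lambda>t. Kv t z) \<bind>
          (\<lambda>v. Pi\<^sub>M {..<length xs} (\<lambda>i. Ky (fst (xs ! i)) (snd (xs ! i)) (v (snd (xs ! i)))))"
        unfolding KV_def
      proof (rule bind_cong[OF refl])
        fix v assume "v \<in> space (PiM {1..T} (\<lambda>t. Kv t z))"
        then have "v \<in> space VV" using sets_eq_imp_space_eq[OF sKV[OF z]] unfolding KV_def by simp
        then show "distr (KY v) R f = Pi\<^sub>M {..<length xs} (\<lambda>i. Ky (fst (xs ! i)) (snd (xs ! i)) (v (snd (xs ! i))))"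
          by (rule inner)
      qed
    qed
    finally show ?thesis unfolding R_def f_def .
  qed
  ultimately show ?thesis by blast
qed

end
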